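(* Let $\tau=(\xi_n)_{n\in\omega}$ be an infinite trace of tidy formulas. Then (1) there is a unique fixpoint formula $\xi=\eta x.\chi$ which occurs infinitely often on $\tau$ and satisfies $\xi\twoheadrightarrow_C^{\xi}\xi_n$ (i.e. $\xi_n\sqsubseteq_C\xi$) for cofinitely many $n$; (2) the number $\max\{\Omega_g(\phi)\mid \phi \text{ a fixpoint formula occurring infinitely often on }\tau\}$ is even iff $\eta=\nu$.
   Context: Syntax. Formulas of the modal $\mu$-calculus are taken in negation normal form: $\phi ::= \top \mid \bot \mid p \mid \neg p \mid x \mid \phi\land\phi\mid\phi\lor\phi\mid\Diamond\phi\mid\Box\phi\mid\mu x.\phi\mid\nu x.\phi$, where $p$ ranges over proposition letters and $x$ over an infinite supply of variables (which occur only positively). The formulas $\top,\bot,p,\neg p,x$ are atomic. $\mathrm{FV}(\phi)$ and $\mathrm{BV}(\phi)$ are the sets of free and bound variables of $\phi$; $\phi$ is tidy if $\mathrm{FV}(\phi)\cap\mathrm{BV}(\phi)=\varnothing$. A fixpoint formula is one of the form $\eta x.\chi$ with $\eta\in\{\mu,\nu\}$; it has type $\eta$, where $\mu$ counts as odd and $\nu$ as even parity, and $\bar\eta$ denotes the other operator. $\chi[\xi/x]$ is the result of replacing every free occurrence of $x$ in $\chi$ by $\xi$; $\xi$ is free for $x$ in $\chi$ if no free variable of $\xi$ becomes bound in $\chi[\xi/x]$. Traces and closure. The trace relation $\rightarrow_C$: $\phi_0\odot\phi_1\rightarrow_C\phi_i$ for $\odot\in\{\land,\lor\}$, $i\in\{0,1\}$;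 $\heartsuit\phi\rightarrow_C\phi$ for $\heartsuit\in\{\Diamond,\Box\}$; $\eta x.\phi\rightarrow_C\phi[\eta x.\phi/x]$; atomic formulas have no successors. $\twoheadrightarrow_C$ is the reflexive transitive closure of $\rightarrow_C$, $\mathrm{Clos}(\phi)=\{\psi\mid\phi\twoheadrightarrow_C\psi\}$ (a finite set), and a trace is a finite or infinite sequence of formulas with consecutive members related by $\rightarrow_C$. Write $\phi\equiv_C\psi$ iff $\phi\twoheadrightarrow_C\psi$ and $\psi\twoheadrightarrow_C\phi$; its equivalence classes are (closure) clusters, and $C(\phi)$ is the cluster of $\phi$. Free subformulas. $\phi\trianglelefteq_f\psi$ iff $\psi=\chi[\phi/y]$ for some formula $\chi$ and variable $y$ with $y\in\mathrm{FV}(\chi)$ and $\phi$ free for $y$ in $\chi$. Closure order. For a formula $\psi$, write $\rho\twoheadrightarrow_C^{\psi}\sigma$ iff there is a trace $\rho=\chi_0\rightarrow_C\cdots\rightarrow_C\chi_n=\sigma$ ($n\ge0$) with $\psi\trianglelefteq_f\chi_i$ for all $i\le n$. For fixpoint formulas $\phi,\psi$: $\phi\sqsubseteq_C\psi$ iff $\psi\twoheadrightarrow_C^{\psi}\phi$; $\phi\sqsubset_C\psi$ iff $\phi\sqsubseteq_C\psi$ and $\psi\not\sqsubseteq_C\phi$. Chains. An alternating $\sqsubset_C$-chain of length $n$ is a sequence $\eta_1x_1.\chi_1,\dots,\eta_nx_n.\chi_n$ of tidy fixpoint formulas with $\eta_ix_i.\chi_i\sqsubset_C\eta_{i+1}x_{i+1}.\chi_{i+1}$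 and $\eta_{i+1}=\bar\eta_i$ for all $i<n$; it starts at the first and leads up to the last formula. For a tidy fixpoint formula $\xi$, $h^\uparrow(\xi)$ is the maximal length of an alternating $\sqsubset_C$-chain starting at $\xi$. For a cluster $C$, $\mathit{cd}(C)$ is the maximal length of an alternating $\sqsubset_C$-chain inside $C$. Global priority map. For a tidy fixpoint formula $\psi=\eta y.\phi$ let $d=\mathit{cd}(C(\psi))-h^\uparrow(\psi)$ and set $\Omega_g(\psi)=d$ if $d$ has parity $\eta$ and $\Omega_g(\psi)=d+1$ otherwise; $\Omega_g$ is undefined on non-fixpoint formulas. *)

theory Defs
  imports Main
begin

datatype fp = Mu | Nu

(* 'p: proposition letters; variables are natural numbers (an infinite supply) *)
datatype 'p fml =
    Top | Bot | Lit 'p | NLit 'p | Var nat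
  | And "'p fml" "'p fml" | Or "'p fml" "'p fml"
  | Dia "'p fml" | Box "'p fml"
  | Fix fp nat "'p fml"

fun FV :: "'p fml \<Rightarrow> nat set" where
  "FV Top = {}" | "FV Bot = {}" | "FV (Lit p) = {}" | "FV (NLit p) = {}"
| "FV (Var x) = {x}"
| "FV (And a b) = FV a \<union> FV b" | "FV (Or a b) = FV a \<union> FV b"
| "FV (Dia a) = FV a" | "FV (Box a) = FV a"
| "FV (Fix e x a) = FV a - {x}"

fun BV :: "'p fml \<Rightarrow> nat set" where
  "BV Top = {}" | "BV Bot = {}" | "BV (Lit p) = {}" | "BV (NLit p) = {}"
| "BV (Var x) = {}"
| "BV (And a b) = BV a \<union> BV b" | "BV (Or a b) = BV a \<union> BV b"
| "BV (Dia a) = BV a" | "BV (Box a) = BV a"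
| "BV (Fix e x a) = insert x (BV a)"

definition tidy :: "'p fml \<Rightarrow> bool" where
  "tidy \<phi> \<longleftrightarrow> FV \<phi> \<inter> BV \<phi> = {}"

fun is_fix :: "'p fml \<Rightarrow> bool" where
  "is_fix (Fix e x a) = True" | "is_fix _ = False"

(* subst \<chi> \<xi> x  =  \<chi>[\<xi>/x]: replace every free occurrence of x in \<chi> by \<xi> (no renaming) *)
fun subst :: "'p fml \<Rightarrow> 'p fml \<Rightarrow> nat \<Rightarrow> 'p fml" where
  "subst (Var y) \<xi> x = (if y = x then \<xi> else Var y)"
| "subst (And a b) \<xi> x = And (subst a \<xi> x) (subst b \<xi> x)"
| "subst (Or a b) \<xi> x = Or (subst a \<xi> x) (subst b \<xi> x)"
| "subst (Dia a) \<xi> x = Dia (subst a \<xi> x)"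
| "subst (Box a) \<xi> x = Box (subst a \<xi> x)"
| "subst (Fix e y a) \<xi> x = (if y = x then Fix e y a else Fix e y (subst a \<xi> x))"
| "subst a \<xi> x = a"

fun free_for :: "'p fml \<Rightarrow> nat \<Rightarrow> 'p fml \<Rightarrow> bool" where
  "free_for \<xi> x (And a b) = (free_for \<xi> x a \<and> free_for \<xi> x b)"
| "free_for \<xi> x (Or a b) = (free_for \<xi> x a \<and> free_for \<xi> x b)"
| "free_for \<xi> x (Dia a) = free_for \<xi> x a"
| "free_for \<xi> x (Box a) = free_for \<xi> x a"
| "free_for \<xi> x (Fix e y a) =
     (y = x \<or> ((x \<notin> FV a \<or> y \<notin> FV \<xi>) \<and> free_for \<xi> x a))"
| "free_for \<xi> x a = True"

inductive step :: "'p fml \<Rightarrow> 'p fml \<Rightarrow> bool" where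
  and_l: "step (And a b) a" | and_r: "step (And a b) b"
| or_l: "step (Or a b) a" | or_r: "step (Or a b) b"
| dia: "step (Dia a) a" | box: "step (Box a) a"
| unfold: "step (Fix e x a) (subst a (Fix e x a) x)"

definition Clos :: "'p fml \<Rightarrow> 'p fml set" where
  "Clos \<phi> = {\<psi>. step\<^sup>*\<^sup>* \<phi> \<psi>}"

definition clos_eq :: "'p fml \<Rightarrow> 'p fml \<Rightarrow> bool" where
  "clos_eq \<phi> \<psi> \<longleftrightarrow> step\<^sup>*\<^sup>* \<phi> \<psi> \<and> step\<^sup>*\<^sup>* \<psi> \<phi>"

definition cluster :: "'p fml \<Rightarrow> 'p fml set" where
  "cluster \<phi> = {\<psi>. clos_eq \<phi> \<psi>}"

definition free_sub :: "'p fml \<Rightarrow> 'p fml \<Rightarrow> bool" where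
  "free_sub \<phi> \<psi> \<longleftrightarrow> (\<exists>\<chi> y. \<psi> = subst \<chi> \<phi> y \<and> y \<in> FV \<chi> \<and> free_for \<phi> y \<chi>)"

(* reach_in \<psi> \<rho> \<sigma>:  \<rho> \<twoheadrightarrow>_C^\<psi> \<sigma> *)
definition reach_in :: "'p fml \<Rightarrow> 'p fml \<Rightarrow> 'p fml \<Rightarrow> bool" where
  "reach_in \<psi> \<rho> \<sigma> \<longleftrightarrow> (\<exists>n f. f 0 = \<rho> \<and> f n = \<sigma> \<and> (\<forall>i<n. step (f i) (f (Suc i)))
                              \<and> (\<forall>i\<le>n. free_sub \<psi> (f i)))"

definition clos_le :: "'p fml \<Rightarrow> 'p fml \<Rightarrow> bool" where
  "clos_le \<phi> \<psi> \<longleftrightarrow> is_fix \<phi> \<and> is_fix \<psi> \<and> reach_in \<psi> \<psi> \<phi>"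

definition clos_less :: "'p fml \<Rightarrow> 'p fml \<Rightarrow> bool" where
  "clos_less \<phi> \<psi> \<longleftrightarrow> clos_le \<phi> \<psi> \<and> \<not> clos_le \<psi> \<phi>"

fun fp_of :: "'p fml \<Rightarrow> fp" where
  "fp_of (Fix e x a) = e" | "fp_of _ = Mu"

definition alt_chain :: "'p fml list \<Rightarrow> bool" where
  "alt_chain cs \<longleftrightarrow> cs \<noteq> [] \<and> (\<forall>c\<in>set cs. is_fix c \<and> tidy c)
     \<and> (\<forall>i. Suc i < length cs \<longrightarrow> clos_less (cs ! i) (cs ! Suc i)
                                  \<and> fp_of (cs ! Suc i) \<noteq> fp_of (cs ! i))"

definition h_up :: "'p fml \<Rightarrow> nat" where
  "h_up \<xi> = Max {length cs | cs. alt_chain cs \<and> hd cs = \<xi>}"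

definition cd :: "'p fml set \<Rightarrow> nat" where
  "cd C = Max {length cs | cs. alt_chain cs \<and> set cs \<subseteq> C}"

definition has_parity :: "int \<Rightarrow> fp \<Rightarrow> bool" where
  "has_parity d e \<longleftrightarrow> (if e = Nu then even d else odd d)"

(* \<Omega>_g, meaningful only on tidy fixpoint formulas *)
definition Omega_g :: "'p fml \<Rightarrow> int" where
  "Omega_g \<psi> = (let d = int (cd (cluster \<psi>)) - int (h_up \<psi>)
                in if has_parity d (fp_of \<psi>) then d else d + 1)"

definition is_trace :: "(nat \<Rightarrow> 'p fml) \<Rightarrow> bool" where
  "is_trace \<tau> \<longleftrightarrow> (\<forall>n. step (\<tau> n) (\<tau> (Suc n)))"

end

theory Submission imports Defs "HOL-Library.Infinite_Set" begin

inductive occ :: "'p fml \<Rightarrow> 'p fml \<Rightarrow> bool" where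
  refl: "occ \<xi> \<xi>"
| andL: "occ \<xi> a \<Longrightarrow> occ \<xi> (And a b)"
| andR: "occ \<xi> b \<Longrightarrow> occ \<xi> (And a b)"
| orL: "occ \<xi> a \<Longrightarrow> occ \<xi> (Or a b)"
| orR: "occ \<xi> b \<Longrightarrow> occ \<xi> (Or a b)"
| dia: "occ \<xi> a \<Longrightarrow> occ \<xi> (Dia a)"
| box: "occ \<xi> a \<Longrightarrow> occ \<xi> (Box a)"
| fixI: "occ \<xi> a \<Longrightarrow> x \<notin> FV \<xi> \<Longrightarrow> occ \<xi> (Fix e x a)"

lemma occ_FV: "occ c \<psi> \<Longrightarrow> FV c \<subseteq> FV \<psi>"
  by (induction rule: occ.induct) auto

lemma occ_trans: "occ \<xi> \<psi> \<Longrightarrow> occ c \<xi> \<Longrightarrow> occ c \<psi>"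
  by (induction rule: occ.induct) (auto intro: occ.intros dest: occ_FV)

lemma occ_size: "occ a b \<Longrightarrow> size a \<le> size b"
  by (induction rule: occ.induct) auto

lemma occ_size_eq: "occ a b \<Longrightarrow> size b \<le> size a \<Longrightarrow> a = b"
  by (induction rule: occ.induct) (auto dest: occ_size)

lemma subst_occ: "y \<in> FV \<chi> \<Longrightarrow> free_for \<xi> y \<chi> \<Longrightarrow> occ \<xi> (subst \<chi> \<xi> y)"
  by (induction \<chi>) (auto intro: occ.intros)

lemma subst_nofree: "x \<notin> FV a \<Longrightarrow> subst a F x = a"
  by (induction a) auto

lemma free_for_nofree: "x \<notin> FV a \<Longrightarrow> free_for F x a"
  by (induction a) auto

lemma finite_FV: "finite (FV a)" by (induction a) auto
lemma finite_BV: "finite (BV a)" by (induction a) auto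

lemma occ_free_sub_aux:
  "occ \<xi> \<phi> \<Longrightarrow> y \<notin> FV \<phi> \<union> BV \<phi> \<Longrightarrow> \<exists>\<chi>. \<phi> = subst \<chi> \<xi> y \<and> y \<in> FV \<chi> \<and> free_for \<xi> y \<chi>"
proof (induction rule: occ.induct)
  case (refl \<xi>)
  then show ?case by (intro exI[of _ "Var y"]) auto
next
  case (andL \<xi> a b)
  then obtain \<chi> where "a = subst \<chi> \<xi> y \<and> y \<in> FV \<chi> \<and> free_for \<xi> y \<chi>" by auto
  then show ?case using andL.prems
    by (intro exI[of _ "And \<chi> b"]) (auto simp: subst_nofree free_for_nofree)
next
  case (andR \<xi> b a)
  then obtain \<chi> where "b = subst \<chi> \<xi> y \<and> y \<in> FV \<chi> \<and> free_for \<xi> y \<chi>" by auto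
  then show ?case using andR.prems
    by (intro exI[of _ "And a \<chi>"]) (auto simp: subst_nofree free_for_nofree)
next
  case (orL \<xi> a b)
  then obtain \<chi> where "a = subst \<chi> \<xi> y \<and> y \<in> FV \<chi> \<and> free_for \<xi> y \<chi>" by auto
  then show ?case using orL.prems
    by (intro exI[of _ "Or \<chi> b"]) (auto simp: subst_nofree free_for_nofree)
next
  case (orR \<xi> b a)
  then obtain \<chi> where "b = subst \<chi> \<xi> y \<and> y \<in> FV \<chi> \<and> free_for \<xi> y \<chi>" by auto
  then show ?case using orR.prems
    by (intro exI[of _ "Or a \<chi>"]) (auto simp: subst_nofree free_for_nofree)
next
  case (dia \<xi> a)
  then obtain \<chi> where "a = subst \<chi> \<xi> y \<and> y \<in> FV \<chi> \<and> free_for \<xi> y \<chi>" by auto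
  then show ?case by (intro exI[of _ "Dia \<chi>"]) auto
next
  case (box \<xi> a)
  then obtain \<chi> where "a = subst \<chi> \<xi> y \<and> y \<in> FV \<chi> \<and> free_for \<xi> y \<chi>" by auto
  then show ?case by (intro exI[of _ "Box \<chi>"]) auto
next
  case (fixI \<xi> a x e)
  then obtain \<chi> where c: "a = subst \<chi> \<xi> y \<and> y \<in> FV \<chi> \<and> free_for \<xi> y \<chi>" by auto
  have "x \<noteq> y" using fixI.prems by auto
  then show ?case using c fixI.hyps by (intro exI[of _ "Fix e x \<chi>"]) auto
qed

lemma free_sub_occ: "free_sub \<xi> \<phi> \<longleftrightarrow> occ \<xi> \<phi>"
proof
  assume "free_sub \<xi> \<phi>" then show "occ \<xi> \<phi>" unfolding free_sub_def using subst_occ by blast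
next
  assume o: "occ \<xi> \<phi>"
  obtain y where "y \<notin> FV \<phi> \<union> BV \<phi>"
    using ex_new_if_finite[OF infinite_UNIV_nat, of "FV \<phi> \<union> BV \<phi>"] finite_FV finite_BV by auto
  then show "free_sub \<xi> \<phi>" unfolding free_sub_def using occ_free_sub_aux[OF o] by blast
qed

lemma occ_Fix_FV: "occ \<xi> (Fix e x b) \<Longrightarrow> x \<notin> FV \<xi>"
  by (cases rule: occ.cases) auto

lemma size_subst_ge: "x \<in> FV a \<Longrightarrow> size F \<le> size (subst a F x)"
  by (induction a) auto

lemma size_subst_gt: "x \<in> FV a \<Longrightarrow> a \<noteq> Var x \<Longrightarrow> size F < size (subst a F x)"
  by (cases a) (auto dest: size_subst_ge[where F=F])

lemma whole_case: "\<xi> = subst a F x \<Longrightarrow> (occ \<xi> a \<and> x \<notin> FV \<xi>) \<or> occ \<xi> F \<or> size F < size \<xi>"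
  by (cases "x \<in> FV a"; cases "a = Var x") (auto simp: subst_nofree size_subst_gt intro: occ.refl)

lemma occ_subst_cases: "occ \<xi> (subst a F x) \<Longrightarrow> (occ \<xi> a \<and> x \<notin> FV \<xi>) \<or> occ \<xi> F \<or> size F < size \<xi>"
proof (induction a)
  case (Var z)
  then show ?case
    by (cases "z = x") (auto elim: occ.cases intro: occ.refl)
next
  case (And b c)
  from And.prems have "\<xi> = subst (And b c) F x \<or> occ \<xi> (subst b F x) \<or> occ \<xi> (subst c F x)"
    by (cases rule: occ.cases) auto
  then show ?case using And.IH whole_case[of \<xi> "And b c" F x] by (auto intro: occ.intros)
next
  case (Or b c)
  from Or.prems have "\<xi> = subst (Or b c) F x \<or> occ \<xi> (subst b F x) \<or> occ \<xi> (subst c F x)"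
    by (cases rule: occ.cases) auto
  then show ?case using Or.IH whole_case[of \<xi> "Or b c" F x] by (auto intro: occ.intros)
next
  case (Dia b)
  from Dia.prems have "\<xi> = subst (Dia b) F x \<or> occ \<xi> (subst b F x)"
    by (cases rule: occ.cases) auto
  then show ?case using Dia.IH whole_case[of \<xi> "Dia b" F x] by (auto intro: occ.intros)
next
  case (Box b)
  from Box.prems have "\<xi> = subst (Box b) F x \<or> occ \<xi> (subst b F x)"
    by (cases rule: occ.cases) auto
  then show ?case using Box.IH whole_case[of \<xi> "Box b" F x] by (auto intro: occ.intros)
next
  case (Fix e z b)
  show ?case
  proof (cases "z = x")
    case True
    then show ?thesis using Fix.prems occ_Fix_FV[of \<xi> e x b] by auto
  next
    case False
    from Fix.prems False have "\<xi> = subst (Fix e z b) F x \<or> (occ \<xi> (subst b F x) \<and> z \<notin> FV \<xi>)"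
      by (cases rule: occ.cases) auto
    then show ?thesis using Fix.IH whole_case[of \<xi> "Fix e z b" F x] by (auto intro: occ.intros)
  qed
qed (auto elim: occ.cases intro: occ.refl)

lemma step_occ_back: "step \<rho> \<sigma> \<Longrightarrow> occ \<xi> \<sigma> \<Longrightarrow> \<not> occ \<xi> \<rho> \<Longrightarrow> is_fix \<rho> \<and> size \<rho> < size \<xi>"
proof (induction rule: step.induct)
  case (unfold e x a)
  then show ?case using occ_subst_cases[of \<xi> a "Fix e x a" x] by (auto intro: occ.intros)
qed (auto intro: occ.intros)


fun ssubst :: "'p fml \<Rightarrow> (nat \<Rightarrow> 'p fml) \<Rightarrow> 'p fml" where
  "ssubst Top \<sigma> = Top" | "ssubst Bot \<sigma> = Bot" | "ssubst (Lit p) \<sigma> = Lit p"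
| "ssubst (NLit p) \<sigma> = NLit p" | "ssubst (Var y) \<sigma> = \<sigma> y"
| "ssubst (And a b) \<sigma> = And (ssubst a \<sigma>) (ssubst b \<sigma>)"
| "ssubst (Or a b) \<sigma> = Or (ssubst a \<sigma>) (ssubst b \<sigma>)"
| "ssubst (Dia a) \<sigma> = Dia (ssubst a \<sigma>)"
| "ssubst (Box a) \<sigma> = Box (ssubst a \<sigma>)"
| "ssubst (Fix e x a) \<sigma> = Fix e x (ssubst a (\<sigma>(x := Var x)))"

fun CL :: "'p fml \<Rightarrow> (nat \<Rightarrow> 'p fml) \<Rightarrow> 'p fml set" where
  "CL (And a b) \<sigma> = insert (ssubst (And a b) \<sigma>) (CL a \<sigma> \<union> CL b \<sigma>)"
| "CL (Or a b) \<sigma> = insert (ssubst (Or a b) \<sigma>) (CL a \<sigma> \<union> CL b \<sigma>)"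
| "CL (Dia a) \<sigma> = insert (ssubst (Dia a) \<sigma>) (CL a \<sigma>)"
| "CL (Box a) \<sigma> = insert (ssubst (Box a) \<sigma>) (CL a \<sigma>)"
| "CL (Fix e x a) \<sigma> = insert (ssubst (Fix e x a) \<sigma>) (CL a (\<sigma>(x := ssubst (Fix e x a) \<sigma>)))"
| "CL a \<sigma> = {ssubst a \<sigma>}"

lemma finite_CL: "finite (CL a \<sigma>)" by (induction a arbitrary: \<sigma>) auto

lemma ssubst_in_CL: "ssubst a \<sigma> \<in> CL a \<sigma>" by (cases a) auto

lemma ssubst_id: "ssubst a Var = a"
  by (induction a) (auto simp: fun_upd_triv)

lemma FV_ssubst: "FV (ssubst a \<sigma>) \<subseteq> (\<Union>y\<in>FV a. FV (\<sigma> y))"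
proof (induction a arbitrary: \<sigma>)
  case (Fix e x a)
  have "FV (ssubst a (\<sigma>(x := Var x))) \<subseteq> (\<Union>y\<in>FV a. FV ((\<sigma>(x := Var x)) y))" by (rule Fix.IH)
  then show ?case by (auto split: if_splits)
qed fastforce+

lemma subst_ssubst:
  "\<sigma> x = Var x \<Longrightarrow> (\<forall>y\<in>FV a - {x}. x \<notin> FV (\<sigma> y)) \<Longrightarrow> subst (ssubst a \<sigma>) G x = ssubst a (\<sigma>(x := G))"
proof (induction a arbitrary: \<sigma>)
  case (Var y)
  then show ?case by (auto simp: subst_nofree)
next
  case (Fix e z b)
  show ?case
  proof (cases "z = x")
    case True
    have "\<sigma>(x := G, x := Var x) = \<sigma>(x := Var x)" by simp
    show ?thesis unfolding True ssubst.simps subst.simps fun_upd_upd by simp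
  next
    case False
    have "subst (ssubst b (\<sigma>(z := Var z))) G x = ssubst b (\<sigma>(z := Var z, x := G))"
      using Fix.prems False by (intro Fix.IH) auto
    note ih = this
    have e: "\<sigma>(z := Var z, x := G) = \<sigma>(x := G, z := Var z)" using False by (rule fun_upd_twist)
    have "subst (ssubst (Fix e z b) \<sigma>) G x = Fix e z (subst (ssubst b (\<sigma>(z := Var z))) G x)"
      using False by simp
    also have "\<dots> = Fix e z (ssubst b (\<sigma>(z := Var z, x := G)))" by (simp only: ih)
    also have "\<dots> = ssubst (Fix e z b) (\<sigma>(x := G))" by (simp only: ssubst.simps e)
    finally show ?thesis .
  qed
qed auto

lemma no_step_Var: "\<not> step (Var y) w" by (auto elim: step.cases)

lemma CL_step:
  "(\<forall>y\<in>FV a. FV (\<sigma> y) \<subseteq> V) \<Longrightarrow> BV a \<inter> V = {} \<Longrightarrow> (\<forall>y\<in>FV a. \<forall>w. step (\<sigma> y) w \<longrightarrow> w \<in> T)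
   \<Longrightarrow> \<rho> \<in> CL a \<sigma> \<Longrightarrow> step \<rho> w \<Longrightarrow> w \<in> CL a \<sigma> \<union> T"
proof (induction a arbitrary: \<sigma> T \<rho> w)
  case (And a b)
  from And.prems(4) consider "\<rho> = ssubst (And a b) \<sigma>" | "\<rho> \<in> CL a \<sigma>" | "\<rho> \<in> CL b \<sigma>" by auto
  then show ?case
  proof cases
    case 1 then show ?thesis using And.prems(5) by (auto elim: step.cases simp: ssubst_in_CL)
  next
    case 2
    have "w \<in> CL a \<sigma> \<union> T"
      by (rule And.IH(1)[OF _ _ _ 2 And.prems(5)]) (insert And.prems, auto)
    then show ?thesis by auto
  next
    case 3
    have "w \<in> CL b \<sigma> \<union> T"
      by (rule And.IH(2)[OF _ _ _ 3 And.prems(5)]) (insert And.prems, auto)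
    then show ?thesis by auto
  qed
next
  case (Or a b)
  from Or.prems(4) consider "\<rho> = ssubst (Or a b) \<sigma>" | "\<rho> \<in> CL a \<sigma>" | "\<rho> \<in> CL b \<sigma>" by auto
  then show ?case
  proof cases
    case 1 then show ?thesis using Or.prems(5) by (auto elim: step.cases simp: ssubst_in_CL)
  next
    case 2
    have "w \<in> CL a \<sigma> \<union> T"
      by (rule Or.IH(1)[OF _ _ _ 2 Or.prems(5)]) (insert Or.prems, auto)
    then show ?thesis by auto
  next
    case 3
    have "w \<in> CL b \<sigma> \<union> T"
      by (rule Or.IH(2)[OF _ _ _ 3 Or.prems(5)]) (insert Or.prems, auto)
    then show ?thesis by auto
  qed
next
  case (Dia a)
  from Dia.prems(4) consider "\<rho> = ssubst (Dia a) \<sigma>" | "\<rho> \<in> CL a \<sigma>" by auto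
  then show ?case
  proof cases
    case 1 then show ?thesis using Dia.prems(5) by (auto elim: step.cases simp: ssubst_in_CL)
  next
    case 2
    have "w \<in> CL a \<sigma> \<union> T"
      by (rule Dia.IH[OF _ _ _ 2 Dia.prems(5)]) (insert Dia.prems, auto)
    then show ?thesis by auto
  qed
next
  case (Box a)
  from Box.prems(4) consider "\<rho> = ssubst (Box a) \<sigma>" | "\<rho> \<in> CL a \<sigma>" by auto
  then show ?case
  proof cases
    case 1 then show ?thesis using Box.prems(5) by (auto elim: step.cases simp: ssubst_in_CL)
  next
    case 2
    have "w \<in> CL a \<sigma> \<union> T"
      by (rule Box.IH[OF _ _ _ 2 Box.prems(5)]) (insert Box.prems, auto)
    then show ?thesis by auto
  qed
next
  case (Fix e x a)
  define G where "G = ssubst (Fix e x a) \<sigma>"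
  have FV_G: "FV G \<subseteq> V" using FV_ssubst[of "Fix e x a" \<sigma>] Fix.prems(1) unfolding G_def by blast
  have stepF: "w' \<in> CL (Fix e x a) \<sigma>" if "step G w'" for w'
  proof -
    have "w' = subst (ssubst a (\<sigma>(x := Var x))) G x"
      using that unfolding G_def by (auto elim: step.cases)
    also have "\<dots> = ssubst a (\<sigma>(x := Var x, x := G))"
    proof (rule subst_ssubst)
      show "\<forall>y\<in>FV a - {x}. x \<notin> FV ((\<sigma>(x := Var x)) y)"
        using Fix.prems(1,2) by auto
    qed simp
    finally have "w' = ssubst a (\<sigma>(x := G))" by simp
    then show ?thesis using ssubst_in_CL[of a "\<sigma>(x := G)"] unfolding G_def by auto
  qed
  from Fix.prems(4) consider "\<rho> = G" | "\<rho> \<in> CL a (\<sigma>(x := G))" unfolding G_def by auto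
  then show ?case
  proof cases
    case 1 then show ?thesis using stepF Fix.prems(5) by auto
  next
    case 2
    have "w \<in> CL a (\<sigma>(x := G)) \<union> (T \<union> CL (Fix e x a) \<sigma>)"
    proof (rule Fix.IH[OF _ _ _ 2 Fix.prems(5)])
      show "\<forall>y\<in>FV a. FV ((\<sigma>(x := G)) y) \<subseteq> V" using Fix.prems(1) FV_G by auto
      show "BV a \<inter> V = {}" using Fix.prems(2) by auto
      show "\<forall>y\<in>FV a. \<forall>w. step ((\<sigma>(x := G)) y) w \<longrightarrow> w \<in> T \<union> CL (Fix e x a) \<sigma>"
        using Fix.prems(3) stepF by auto
    qed
    then show ?thesis unfolding G_def by auto
  qed
qed (auto elim: step.cases)

lemma trace_in_CL:
  assumes tr: "\<forall>n. step (\<tau> n) (\<tau> (Suc n))" and td: "tidy (\<tau> 0)"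
  shows "\<tau> n \<in> CL (\<tau> 0) Var"
proof (induction n)
  case 0 show ?case using ssubst_in_CL[of "\<tau> 0" Var] by (simp add: ssubst_id)
next
  case (Suc n)
  have "\<tau> (Suc n) \<in> CL (\<tau> 0) Var \<union> {}"
    by (rule CL_step[OF _ _ _ Suc tr[rule_format]], insert td, auto simp: tidy_def no_step_Var)
  then show ?case by simp
qed

lemma finite_range_trace:
  assumes "\<forall>n. step (\<tau> n) (\<tau> (Suc n))" and "tidy (\<tau> 0)"
  shows "finite (range \<tau>)"
  using trace_in_CL[OF assms] finite_CL by (metis finite_subset image_subsetI)


lemma reach_in_last: "reach_in \<psi> \<rho> \<sigma> \<Longrightarrow> occ \<psi> \<sigma>"
  unfolding reach_in_def free_sub_occ[symmetric] by auto

lemma clos_le_occ: "clos_le \<phi> \<psi> \<Longrightarrow> occ \<psi> \<phi>"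
  unfolding clos_le_def using reach_in_last by blast

lemma clos_less_size: "clos_less \<phi> \<psi> \<Longrightarrow> size \<psi> < size \<phi>"
proof -
  assume a: "clos_less \<phi> \<psi>"
  then have o: "occ \<psi> \<phi>" unfolding clos_less_def using clos_le_occ by blast
  have "\<psi> \<noteq> \<phi>" using a unfolding clos_less_def by auto
  then show ?thesis using occ_size[OF o] occ_size_eq[OF o] by fastforce
qed

lemma reach_in_trans:
  assumes r1: "reach_in c c b" and r2: "reach_in b b a"
  shows "reach_in c c a"
proof -
  have ocb: "occ c b" using reach_in_last[OF r1] .
  from r1 obtain n1 f where f: "f 0 = c" "f n1 = b" "\<forall>i<n1. step (f i) (f (Suc i))" "\<forall>i\<le>n1. free_sub c (f i)"
    unfolding reach_in_def by blast
  from r2 obtain n2 g where g: "g 0 = b" "g n2 = a" "\<forall>i<n2. step (g i) (g (Suc i))" "\<forall>i\<le>n2. free_sub b (g i)"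
    unfolding reach_in_def by blast
  define h where "h i = (if i \<le> n1 then f i else g (i - n1))" for i
  have "h 0 = c" using f by (simp add: h_def)
  moreover have "h (n1 + n2) = a" using f g by (cases n2) (auto simp: h_def)
  moreover have "\<forall>i<n1+n2. step (h i) (h (Suc i))"
  proof (intro allI impI)
    fix i assume i: "i < n1 + n2"
    show "step (h i) (h (Suc i))"
    proof (cases "Suc i \<le> n1")
      case True then show ?thesis using f(3) by (simp add: h_def)
    next
      case False
      show ?thesis
      proof (cases "i = n1")
        case True
        have "step (g 0) (g (Suc 0))" using g(3) i True by auto
        then show ?thesis using f(2) g(1) True by (simp add: h_def)
      next
        case False
        then have "i > n1" using \<open>\<not> Suc i \<le> n1\<close> by auto
        then have "Suc i - n1 = Suc (i - n1)" by auto
        then show ?thesis using g(3) i \<open>i > n1\<close> by (simp add: h_def)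
      qed
    qed
  qed
  moreover have "\<forall>i\<le>n1+n2. free_sub c (h i)"
  proof (intro allI impI)
    fix i assume i: "i \<le> n1 + n2"
    show "free_sub c (h i)"
    proof (cases "i \<le> n1")
      case True then show ?thesis using f(4) by (simp add: h_def)
    next
      case False
      have "i - n1 \<le> n2" using i by auto
      then have "free_sub b (g (i - n1))" using g(4) by blast
      then have "occ b (g (i - n1))" by (simp add: free_sub_occ)
      then have "occ c (g (i - n1))" using ocb occ_trans by blast
      then show ?thesis using False by (simp add: h_def free_sub_occ)
    qed
  qed
  ultimately show ?thesis unfolding reach_in_def by blast
qed

lemma clos_le_size: "clos_le \<phi> \<psi> \<Longrightarrow> size \<psi> \<le> size \<phi>"
  using clos_le_occ occ_size by blast

lemma clos_less_trans: "clos_less a b \<Longrightarrow> clos_less b c \<Longrightarrow> clos_less a c"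
proof -
  assume ab: "clos_less a b" and bc: "clos_less b c"
  have "clos_le a c" using ab bc reach_in_trans unfolding clos_less_def clos_le_def by blast
  moreover have "\<not> clos_le c a"
    using clos_less_size[OF ab] clos_less_size[OF bc] clos_le_size[of c a] by auto
  ultimately show ?thesis unfolding clos_less_def by blast
qed

lemma is_fix_size: "is_fix a \<Longrightarrow> size a \<ge> 1" by (cases a) auto

lemma alt_chain_len: "alt_chain cs \<Longrightarrow> length cs \<le> size (hd cs)"
proof -
  assume a: "alt_chain cs"
  have dec: "size (cs ! i) + i \<le> size (cs ! 0)" if "i < length cs" for i
    using that
  proof (induction i)
    case 0 then show ?case by simp
  next
    case (Suc i)
    have "clos_less (cs ! i) (cs ! Suc i)" using a Suc.prems unfolding alt_chain_def by blast
    then have "size (cs ! Suc i) < size (cs ! i)" by (rule clos_less_size)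
    then show ?case using Suc by auto
  qed
  have ne: "cs \<noteq> []" using a unfolding alt_chain_def by auto
  have "is_fix (cs ! (length cs - 1))" using a ne unfolding alt_chain_def by auto
  then have "size (cs ! (length cs - 1)) \<ge> 1" by (rule is_fix_size)
  moreover have "size (cs ! (length cs - 1)) + (length cs - 1) \<le> size (cs ! 0)" using ne by (intro dec) auto
  ultimately show ?thesis using ne by (simp add: hd_conv_nth)
qed

lemma alt_chain_single: "is_fix \<phi> \<Longrightarrow> tidy \<phi> \<Longrightarrow> alt_chain [\<phi>]"
  unfolding alt_chain_def by auto

lemma alt_chain_Cons:
  assumes "alt_chain cs" "is_fix \<phi>" "tidy \<phi>" "clos_less \<phi> (hd cs)" "fp_of (hd cs) \<noteq> fp_of \<phi>"
  shows "alt_chain (\<phi> # cs)"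
proof -
  have ne: "cs \<noteq> []" using assms(1) unfolding alt_chain_def by auto
  have "\<forall>i. Suc i < length (\<phi> # cs) \<longrightarrow> clos_less ((\<phi> # cs) ! i) ((\<phi> # cs) ! Suc i) \<and> fp_of ((\<phi> # cs) ! Suc i) \<noteq> fp_of ((\<phi> # cs) ! i)"
  proof (intro allI impI)
    fix i assume i: "Suc i < length (\<phi> # cs)"
    show "clos_less ((\<phi> # cs) ! i) ((\<phi> # cs) ! Suc i) \<and> fp_of ((\<phi> # cs) ! Suc i) \<noteq> fp_of ((\<phi> # cs) ! i)"
    proof (cases i)
      case 0 then show ?thesis using assms ne by (simp add: hd_conv_nth)
    next
      case (Suc j) then show ?thesis using assms(1) i unfolding alt_chain_def by auto
    qed
  qed
  then show ?thesis using assms unfolding alt_chain_def by auto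
qed

lemma alt_chain_tl: "alt_chain (a # cs) \<Longrightarrow> cs \<noteq> [] \<Longrightarrow> alt_chain cs \<and> clos_less a (hd cs) \<and> fp_of (hd cs) \<noteq> fp_of a"
proof -
  assume a: "alt_chain (a # cs)" and ne: "cs \<noteq> []"
  have "\<forall>i. Suc i < length cs \<longrightarrow> clos_less (cs ! i) (cs ! Suc i) \<and> fp_of (cs ! Suc i) \<noteq> fp_of (cs ! i)"
  proof (intro allI impI)
    fix i assume "Suc i < length cs"
    then show "clos_less (cs ! i) (cs ! Suc i) \<and> fp_of (cs ! Suc i) \<noteq> fp_of (cs ! i)"
      using a unfolding alt_chain_def by (metis Suc_less_eq length_Cons nth_Cons_Suc)
  qed
  then have "alt_chain cs" using a ne unfolding alt_chain_def by auto
  moreover have "clos_less a (hd cs) \<and> fp_of (hd cs) \<noteq> fp_of a"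
    using a ne unfolding alt_chain_def by (metis hd_conv_nth length_Cons length_greater_0_conv nth_Cons_0 nth_Cons_Suc Suc_less_eq)
  ultimately show ?thesis by blast
qed

lemma h_up_facts:
  assumes "is_fix \<xi>" "tidy \<xi>"
  shows "finite {length cs | cs. alt_chain cs \<and> hd cs = \<xi>}"
    and "\<exists>cs. alt_chain cs \<and> hd cs = \<xi> \<and> length cs = h_up \<xi>"
proof -
  show f: "finite {length cs | cs. alt_chain cs \<and> hd cs = \<xi>}"
    by (rule finite_subset[of _ "{..size \<xi>}"]) (auto dest: alt_chain_len)
  have "alt_chain [\<xi>] \<and> hd [\<xi>] = \<xi>" using alt_chain_single[OF assms] by simp
  then have "length [\<xi>] \<in> {length cs | cs. alt_chain cs \<and> hd cs = \<xi>}"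
    by blast
  then have "h_up \<xi> \<in> {length cs | cs. alt_chain cs \<and> hd cs = \<xi>}"
    unfolding h_up_def using f by (intro Max_in) auto
  then show "\<exists>cs. alt_chain cs \<and> hd cs = \<xi> \<and> length cs = h_up \<xi>" by auto
qed

lemma h_up_ge:
  assumes lt: "clos_less \<phi> \<xi>" and "tidy \<phi>" "is_fix \<phi>" "tidy \<xi>" "is_fix \<xi>"
  shows "h_up \<xi> + (if fp_of \<phi> = fp_of \<xi> then 0 else 1) \<le> h_up \<phi>"
proof -
  obtain cs where cs: "alt_chain cs" "hd cs = \<xi>" "length cs = h_up \<xi>"
    using h_up_facts(2)[OF assms(5,4)] by blast
  have ne: "cs \<noteq> []" using cs(1) unfolding alt_chain_def by auto
  have ex: "\<exists>cs'. alt_chain cs' \<and> hd cs' = \<phi> \<and> length cs' = h_up \<xi> + (if fp_of \<phi> = fp_of \<xi> then 0 else 1)"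
  proof (cases "fp_of \<phi> = fp_of \<xi>")
    case False
    have "alt_chain (\<phi> # cs)" using cs assms False by (intro alt_chain_Cons) auto
    then show ?thesis using cs False by (intro exI[of _ "\<phi> # cs"]) auto
  next
    case True
    obtain cs2 where cs2: "cs = \<xi> # cs2" using ne cs(2) by (cases cs) auto
    show ?thesis
    proof (cases "cs2 = []")
      case True
      then show ?thesis using cs cs2 \<open>fp_of \<phi> = fp_of \<xi>\<close> alt_chain_single[OF assms(3,2)]
        by (intro exI[of _ "[\<phi>]"]) auto
    next
      case False
      have t: "alt_chain cs2 \<and> clos_less \<xi> (hd cs2) \<and> fp_of (hd cs2) \<noteq> fp_of \<xi>"
        using alt_chain_tl[of \<xi> cs2] cs(1) cs2 False by auto
      have "alt_chain (\<phi> # cs2)"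
        using t assms True clos_less_trans[OF lt] by (intro alt_chain_Cons) auto
      then show ?thesis using cs cs2 True by (intro exI[of _ "\<phi> # cs2"]) auto
    qed
  qed
  then obtain cs' where cs': "alt_chain cs'" "hd cs' = \<phi>" "length cs' = h_up \<xi> + (if fp_of \<phi> = fp_of \<xi> then 0 else 1)"
    by blast
  then have "length cs' \<in> {length cs | cs. alt_chain cs \<and> hd cs = \<phi>}" by blast
  then have "length cs' \<le> h_up \<phi>" unfolding h_up_def[of \<phi>]
    by (rule Max_ge[OF h_up_facts(1)[OF assms(3,2)]])
  then show ?thesis using cs'(3) by simp
qed

lemma Omega_even: "even (Omega_g \<psi>) \<longleftrightarrow> fp_of \<psi> = Nu"
  unfolding Omega_g_def Let_def has_parity_def by (cases "fp_of \<psi>") auto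

lemma om_aux:
  fixes d d' :: int
  assumes "(e = e' \<and> d \<le> d') \<or> (e \<noteq> e' \<and> d + 1 \<le> d')"
  shows "(if has_parity d e then d else d+1) \<le> (if has_parity d' e' then d' else d'+1)"
proof (cases "e = e' \<and> d = d'")
  case True then show ?thesis by simp
next
  case False
  then have "d + 1 \<le> d'" using assms by auto
  then show ?thesis by auto
qed

lemma Omega_le:
  assumes "cd (cluster \<phi>) = cd (cluster \<xi>)"
    and "h_up \<xi> + (if fp_of \<phi> = fp_of \<xi> then 0 else 1) \<le> h_up \<phi>"
  shows "Omega_g \<phi> \<le> Omega_g \<xi>"
proof -
  define c where "c = int (cd (cluster \<xi>))"
  have c2: "int (cd (cluster \<phi>)) = c" using assms(1) c_def by simp
  have h: "(fp_of \<phi> = fp_of \<xi> \<and> c - int (h_up \<phi>) \<le> c - int (h_up \<xi>)) \<or>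
    (fp_of \<phi> \<noteq> fp_of \<xi> \<and> c - int (h_up \<phi>) + 1 \<le> c - int (h_up \<xi>))"
  proof (cases "fp_of \<phi> = fp_of \<xi>")
    case True then show ?thesis using assms(2) by simp
  next
    case False then show ?thesis using assms(2) by simp
  qed
  have "Omega_g \<phi> = (if has_parity (c - int (h_up \<phi>)) (fp_of \<phi>) then c - int (h_up \<phi>) else c - int (h_up \<phi>) + 1)"
    unfolding Omega_g_def Let_def c2 by simp
  moreover have "Omega_g \<xi> = (if has_parity (c - int (h_up \<xi>)) (fp_of \<xi>) then c - int (h_up \<xi>) else c - int (h_up \<xi>) + 1)"
    unfolding Omega_g_def Let_def c_def by simp
  ultimately show ?thesis using om_aux[OF h] by simp
qed


lemma trace_rtrancl:
  assumes tr: "\<forall>n. step (\<tau> n) (\<tau> (Suc n))" and "i \<le> j"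
  shows "step\<^sup>*\<^sup>* (\<tau> i) (\<tau> j)"
  using assms(2)
proof (induction j rule: dec_induct)
  case base then show ?case by simp
next
  case (step k) then show ?case using tr by (meson rtranclp.rtrancl_into_rtrancl)
qed

lemma infm_reach:
  assumes tr: "\<forall>n. step (\<tau> n) (\<tau> (Suc n))" and a: "\<exists>\<^sub>\<infinity>n. \<tau> n = \<phi>" and b: "\<exists>\<^sub>\<infinity>n. \<tau> n = \<psi>"
  shows "step\<^sup>*\<^sup>* \<phi> \<psi>"
proof -
  obtain i where i: "\<tau> i = \<phi>" using INFM_EX[OF a] by blast
  obtain j where j: "j \<ge> i" "\<tau> j = \<psi>" using b unfolding INFM_nat_le by blast
  show ?thesis using trace_rtrancl[OF tr j(1)] i j by simp
qed

lemma part2: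
  assumes tr: "\<forall>n. step (\<tau> n) (\<tau> (Suc n))" and td: "\<forall>n. tidy (\<tau> n)"
    and finR: "finite (range \<tau>)" and inf: "\<exists>\<^sub>\<infinity>n. \<tau> n = \<xi>"
    and mr: "\<forall>\<^sub>\<infinity>n. reach_in \<xi> \<xi> (\<tau> n)" and fx: "is_fix \<xi>"
  shows "Max {Omega_g \<phi> | \<phi>. is_fix \<phi> \<and> (\<exists>\<^sub>\<infinity>n. \<tau> n = \<phi>)} = Omega_g \<xi>"
proof -
  let ?P = "{\<phi>. is_fix \<phi> \<and> (\<exists>\<^sub>\<infinity>n. \<tau> n = \<phi>)}"
  have sub: "?P \<subseteq> range \<tau>" using INFM_EX by fastforce
  have eq: "{Omega_g \<phi> | \<phi>. is_fix \<phi> \<and> (\<exists>\<^sub>\<infinity>n. \<tau> n = \<phi>)} = Omega_g ` ?P" by auto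
  have fin: "finite (Omega_g ` ?P)" using finite_subset[OF sub finR] by simp
  have tx: "tidy \<xi>" using INFM_EX[OF inf] td by auto
  have le: "Omega_g \<phi> \<le> Omega_g \<xi>" if P: "is_fix \<phi>" "\<exists>\<^sub>\<infinity>n. \<tau> n = \<phi>" for \<phi>
  proof (cases "\<phi> = \<xi>")
    case True then show ?thesis by simp
  next
    case False
    obtain n where n: "\<tau> n = \<phi>" "reach_in \<xi> \<xi> (\<tau> n)" using INFM_EX[OF INFM_conjI[OF P(2) mr]] by blast
    have tp: "tidy \<phi>" using n td by auto
    have le1: "clos_le \<phi> \<xi>" unfolding clos_le_def using n P fx by auto
    have "\<not> clos_le \<xi> \<phi>"
    proof
      assume "clos_le \<xi> \<phi>"
      then have "occ \<phi> \<xi>" by (rule clos_le_occ)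
      moreover have "occ \<xi> \<phi>" using le1 by (rule clos_le_occ)
      ultimately show False using False occ_size occ_size_eq by metis
    qed
    then have lt: "clos_less \<phi> \<xi>" using le1 unfolding clos_less_def by blast
    have "clos_eq \<phi> \<xi>" unfolding clos_eq_def using infm_reach[OF tr] P(2) inf by blast
    then have "cluster \<phi> = cluster \<xi>" unfolding cluster_def clos_eq_def
      by (auto intro: rtranclp_trans)
    then show ?thesis using Omega_le h_up_ge[OF lt tp P(1) tx fx] by metis
  qed
  show ?thesis unfolding eq
    by (rule Max_eqI[OF fin]) (use le fx inf in auto)
qed

lemma uniq:
  assumes "\<exists>\<^sub>\<infinity>n. \<tau> n = \<xi>1" "\<forall>\<^sub>\<infinity>n. reach_in \<xi>1 \<xi>1 (\<tau> n)"
    and "\<exists>\<^sub>\<infinity>n. \<tau> n = \<xi>2" "\<forall>\<^sub>\<infinity>n. reach_in \<xi>2 \<xi>2 (\<tau> n)"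
  shows "\<xi>1 = \<xi>2"
proof -
  obtain n where n: "\<tau> n = \<xi>1" "reach_in \<xi>2 \<xi>2 (\<tau> n)" using INFM_EX[OF INFM_conjI[OF assms(1,4)]] by blast
  obtain m where m: "\<tau> m = \<xi>2" "reach_in \<xi>1 \<xi>1 (\<tau> m)" using INFM_EX[OF INFM_conjI[OF assms(3,2)]] by blast
  have "occ \<xi>2 \<xi>1" using reach_in_last n by metis
  moreover have "occ \<xi>1 \<xi>2" using reach_in_last m by metis
  ultimately show ?thesis using occ_size occ_size_eq by metis
qed

lemma step_nonfix_size: "step \<rho> \<sigma> \<Longrightarrow> \<not> is_fix \<rho> \<Longrightarrow> size \<sigma> < size \<rho>"
  by (cases rule: step.cases) auto

lemma part1:
  assumes tr: "\<forall>n. step (\<tau> n) (\<tau> (Suc n))" and finR: "finite (range \<tau>)"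
  shows "\<exists>\<xi>. is_fix \<xi> \<and> (\<exists>\<^sub>\<infinity>n. \<tau> n = \<xi>) \<and> (\<forall>\<^sub>\<infinity>n. reach_in \<xi> \<xi> (\<tau> n))"
proof -
  define S where "S = {\<phi>. \<exists>\<^sub>\<infinity>n. \<tau> n = \<phi>}"
  have "{n. \<tau> n \<notin> S} = (\<Union>\<phi>\<in>range \<tau> - S. {n. \<tau> n = \<phi>})" by auto
  moreover have "finite (\<Union>\<phi>\<in>range \<tau> - S. {n. \<tau> n = \<phi>})"
  proof (rule finite_UN_I)
    show "finite (range \<tau> - S)" using finR by simp
    fix \<phi> assume "\<phi> \<in> range \<tau> - S"
    then show "finite {n. \<tau> n = \<phi>}" unfolding S_def INFM_iff_infinite by simp
  qed
  ultimately have "\<forall>\<^sub>\<infinity>n. \<tau> n \<in> S" unfolding MOST_iff_cofinite by simp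
  then obtain N where N: "\<forall>n\<ge>N. \<tau> n \<in> S" unfolding MOST_nat_le by blast
  have exfix: "\<exists>\<phi>\<in>S. is_fix \<phi>"
  proof (rule ccontr)
    assume "\<not> ?thesis"
    then have nf: "\<forall>n\<ge>N. \<not> is_fix (\<tau> n)" using N by auto
    have "size (\<tau> (N + k)) + k \<le> size (\<tau> N)" for k
    proof (induction k)
      case 0 then show ?case by simp
    next
      case (Suc k)
      have "size (\<tau> (Suc (N + k))) < size (\<tau> (N + k))"
        using step_nonfix_size[OF tr[rule_format, of "N + k"]] nf by simp
      then show ?case using Suc by simp
    qed
    from this[of "Suc (size (\<tau> N))"] show False by simp
  qed
  define k0 where "k0 = (LEAST k. \<exists>\<phi>\<in>S. is_fix \<phi> \<and> size \<phi> = k)"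
  have "\<exists>\<phi>\<in>S. is_fix \<phi> \<and> size \<phi> = k0"
  proof -
    obtain \<phi> where "\<phi> \<in> S" "is_fix \<phi>" using exfix by blast
    then have "\<exists>k. \<exists>\<phi>\<in>S. is_fix \<phi> \<and> size \<phi> = k" by blast
    then show ?thesis unfolding k0_def by (rule LeastI_ex)
  qed
  then obtain \<xi> where \<xi>: "\<xi> \<in> S" "is_fix \<xi>" "size \<xi> = k0" by blast
  have minimal: "size \<xi> \<le> size \<phi>" if "\<phi> \<in> S" "is_fix \<phi>" for \<phi>
  proof -
    have "k0 \<le> size \<phi>" unfolding k0_def by (rule Least_le) (use that in blast)
    then show ?thesis using \<xi>(3) by simp
  qed
  have inf: "\<exists>\<^sub>\<infinity>n. \<tau> n = \<xi>" using \<xi>(1) unfolding S_def by simp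
  have never: "\<forall>k\<ge>n. \<not> occ \<xi> (\<tau> k)" if nN: "n \<ge> N" and no: "\<not> occ \<xi> (\<tau> n)" for n
  proof (intro allI impI)
    fix k assume "n \<le> k"
    then show "\<not> occ \<xi> (\<tau> k)"
    proof (induction k rule: dec_induct)
      case base show ?case using no .
    next
      fix k' assume hk: "n \<le> k'" "k' < k" "\<not> occ \<xi> (\<tau> k')"
      show "\<not> occ \<xi> (\<tau> (Suc k'))"
      proof
        assume o: "occ \<xi> (\<tau> (Suc k'))"
        have a: "is_fix (\<tau> k') \<and> size (\<tau> k') < size \<xi>"
          by (rule step_occ_back[OF tr[rule_format, of k'] o hk(3)])
        have "k' \<ge> N" using hk(1) nN by simp
        then have "\<tau> k' \<in> S" using N by blast
        then have "size \<xi> \<le> size (\<tau> k')" using minimal a by blast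
        then show False using a by simp
      qed
    qed
  qed
  obtain m where m: "m \<ge> N" "\<tau> m = \<xi>" using inf unfolding INFM_nat_le by blast
  have allocc: "occ \<xi> (\<tau> n)" if "n \<ge> m" for n
  proof (rule ccontr)
    assume "\<not> occ \<xi> (\<tau> n)"
    moreover obtain k where "k \<ge> n" "\<tau> k = \<xi>" using inf unfolding INFM_nat_le by blast
    moreover have "n \<ge> N" using that m by simp
    ultimately have "\<not> occ \<xi> (\<tau> k)" using never[of n] by blast
    then show False using \<open>\<tau> k = \<xi>\<close> occ.refl by metis
  qed
  have "reach_in \<xi> \<xi> (\<tau> n)" if "n \<ge> m" for n
    unfolding reach_in_def
  proof (intro exI conjI)
    show "(\<lambda>i. \<tau> (m + i)) 0 = \<xi>" using m by simp
    show "(\<lambda>i. \<tau> (m + i)) (n - m) = \<tau> n" using that by simp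
    show "\<forall>i<n - m. step ((\<lambda>i. \<tau> (m + i)) i) ((\<lambda>i. \<tau> (m + i)) (Suc i))" using tr by simp
    show "\<forall>i\<le>n - m. free_sub \<xi> ((\<lambda>i. \<tau> (m + i)) i)" using allocc by (simp add: free_sub_occ)
  qed
  then have "\<forall>\<^sub>\<infinity>n. reach_in \<xi> \<xi> (\<tau> n)" unfolding MOST_nat_le by blast
  then show ?thesis using \<xi>(2) inf by blast
qed

theorem mainTheorem5:
  fixes \<tau> :: "nat \<Rightarrow> 'p fml"
  assumes "is_trace \<tau>" and "\<forall>n. tidy (\<tau> n)"
  shows "(\<exists>!\<xi>. is_fix \<xi> \<and> (\<exists>\<^sub>\<infinity>n. \<tau> n = \<xi>) \<and> (\<forall>\<^sub>\<infinity>n. reach_in \<xi> \<xi> (\<tau> n)))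
       \<and> (\<forall>e x \<chi>. (\<exists>\<^sub>\<infinity>n. \<tau> n = Fix e x \<chi>) \<and> (\<forall>\<^sub>\<infinity>n. reach_in (Fix e x \<chi>) (Fix e x \<chi>) (\<tau> n))
            \<longrightarrow> (even (Max {Omega_g \<phi> | \<phi>. is_fix \<phi> \<and> (\<exists>\<^sub>\<infinity>n. \<tau> n = \<phi>)}) \<longleftrightarrow> e = Nu))"
proof -
  have tr: "\<forall>n. step (\<tau> n) (\<tau> (Suc n))" using assms(1) unfolding is_trace_def by blast
  have finR: "finite (range \<tau>)" using finite_range_trace[OF tr] assms(2) by blast
  have p1: "\<exists>!\<xi>. is_fix \<xi> \<and> (\<exists>\<^sub>\<infinity>n. \<tau> n = \<xi>) \<and> (\<forall>\<^sub>\<infinity>n. reach_in \<xi> \<xi> (\<tau> n))"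
    using part1[OF tr finR] uniq by blast
  have p2: "even (Max {Omega_g \<phi> | \<phi>. is_fix \<phi> \<and> (\<exists>\<^sub>\<infinity>n. \<tau> n = \<phi>)}) \<longleftrightarrow> e = Nu"
    if "(\<exists>\<^sub>\<infinity>n. \<tau> n = Fix e x \<chi>)" "(\<forall>\<^sub>\<infinity>n. reach_in (Fix e x \<chi>) (Fix e x \<chi>) (\<tau> n))" for e x \<chi>
  proof -
    have "Max {Omega_g \<phi> | \<phi>. is_fix \<phi> \<and> (\<exists>\<^sub>\<infinity>n. \<tau> n = \<phi>)} = Omega_g (Fix e x \<chi>)"
      by (rule part2[OF tr assms(2) finR that]) simp
    then show ?thesis using Omega_even[of "Fix e x \<chi>"] by simp
  qed
  show ?thesis using p1 p2 by blast
qed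

end
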